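(* (a) Let $\Gamma$ be a perfect matching drawing containing a matching edge $e=uv$ inside a disk $D$ that meets $\Gamma$ only in $e$, its endpoints, and initial segments of the four other edges at $u$ and $v$. Let the edge-ends of these other edges be $\alpha,\beta$ at $u$ and $\gamma,\delta$ at $v$, in cyclic order $\alpha,\beta,\delta,\gamma$ around $\partial D$. Let $\Gamma_H$ be obtained by the IH-move at $e$: inside $D$, replace $u,v,e$ by new vertices $u',v'$ and a new matching edge $e'=u'v'$, with $\alpha,\gamma$ attached to $u'$ and $\beta,\delta$ attached to $v'$. Let $\Gamma_{\mathrm{I}}$ be obtained from $\Gamma$ by replacing the contents of $D$ with two disjoint arcs joining $\alpha$ to $\gamma$ and $\beta$ to $\delta$, and let $\Gamma_{=}$ be obtained by replacing the contents of $D$ with two disjoint arcs joining $\alpha$ to $\beta$ and $\gamma$ to $\delta$. Then $$\langle\Gamma\rangle_2-\langle\Gamma_H\rangle_2=\langle\Gamma_{\mathrm{I}}\rangle_2-\langle\Gamma_{=}\rangle_2.$$ (b) Let $G_1$ be a planar trivalent graph with perfect matching $M_1$, and perform the same local constructions on a plane embedding, at a matching edge $e=uv$ as in (a), producing a plane graph $G_2$ with perfect matching $M_2=(M_1\setminus\{e\})\cup\{e'\}$ (the IH-move), a plane graph $G_3$ (delete $u,v,e$ and join the edges ending in $\alpha,\gamma$ into one edge and the edges ending in $\beta,\delta$ into one edge) with perfect matching $M_3=M_1\setminus\{e\}$, and a plane graph $G_4$ (delete $u,v,e$ and join the edges ending in $\alpha,\beta$ into one edge and those ending in $\gamma,\delta$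 into one edge) with perfect matching $M_4=M_1\setminus\{e\}$. Then $$|G_1:M_1|_2-|G_2:M_2|_2=|G_3:M_3|_2-|G_4:M_4|_2.$$
   Context: Graphs are finite and may have multiple edges; trivalent means every vertex has degree $3$. $|G:M|_2$ denotes the number of $2$-factors (spanning subgraphs in which every vertex has degree $2$) of $G$ that contain every edge of $M$. A perfect matching drawing $\Gamma$ is a collection of trivalent vertices, edges and vertex-free closed curves drawn in the $2$-sphere by a generic immersion (transverse double points away from vertices, carrying no extra data), together with a set $M$ of edges forming a perfect matching of the vertices. For a matching edge $e=uv$ with other edge-ends $\alpha,\beta$ at $u$ and $\gamma,\delta$ at $v$ in cyclic order $\alpha,\beta,\delta,\gamma$ around a small disk about $e$, the $0$-resolution deletes $e,u,v$ and joins $\alpha$–$\gamma$ and $\beta$–$\delta$ by disjoint arcs, and the $1$-resolution joins $\alpha$–$\delta$ and $\beta$–$\gamma$ by two arcs crossing once. For a state $s:M\to\{0,1\}$, resolving every matching edge gives $c(s)$ immersed closed curves, and the $2$-factor bracket is $\langle\Gamma\rangle_2(z)=\sum_s(-z)^{|s|}(z+z^{-1})^{c(s)}\in\mathbb{Z}[z,z^{-1}]$, $|s|$ being the number of edges assigned $1$. *)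

theory Defs
  imports Main "HOL-Library.FuncSet" "HOL-Computational_Algebra.Formal_Laurent_Series"
begin

text \<open>Points ('p) are marked points on the non-matching edges / closed curves
  (in particular the four edge-ends around each matching edge).
  arcs: arcs of the drawing joining two points (non-matching edges, pieces of
  curves); medges: the matching edges, each with its quadruple
  quad e = (a,b,c,d): a,b are the other edge-ends at the first endpoint u,
  c,d those at the second endpoint v, in cyclic order a,b,d,c around a small
  disk about e.  nloops: number of vertex-free closed curves not passing
  through any point.  Crossings carry no data and are not recorded.\<close>

type_synonym 'p quad = "'p \<times> 'p \<times> 'p \<times> 'p"

record ('p, 'e) pmdrawing =
  pts :: "'p set"
  arcs :: "('p \<times> 'p) list"
  medges :: "'e set"
  quad :: "'e \<Rightarrow> 'p quad"
  nloops :: nat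

fun qset :: "'p quad \<Rightarrow> 'p set" where
  "qset (a, b, c, d) = {a, b, c, d}"

fun qdistinct :: "'p quad \<Rightarrow> bool" where
  "qdistinct (a, b, c, d) = distinct [a, b, c, d]"

definition arc_deg :: "('p \<times> 'p) list \<Rightarrow> 'p \<Rightarrow> nat" where
  "arc_deg A p = length (filter (\<lambda>(x, y). x = p) A) + length (filter (\<lambda>(x, y). y = p) A)"

text \<open>Well-formedness: every point lies on exactly two strands (arc ends or
  slots at matching edges), so that every resolution is a union of closed curves.\<close>
definition pm_drawing :: "('p, 'e, 'z) pmdrawing_scheme \<Rightarrow> bool" where
  "pm_drawing \<Gamma> \<longleftrightarrow> finite (pts \<Gamma>) \<and> finite (medges \<Gamma>) \<and>
     (\<forall>(x, y) \<in> set (arcs \<Gamma>). x \<in> pts \<Gamma> \<and> y \<in> pts \<Gamma>) \<and>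
     (\<forall>e \<in> medges \<Gamma>. qdistinct (quad \<Gamma> e) \<and> qset (quad \<Gamma> e) \<subseteq> pts \<Gamma>) \<and>
     (\<forall>p \<in> pts \<Gamma>. arc_deg (arcs \<Gamma>) p + card {e \<in> medges \<Gamma>. p \<in> qset (quad \<Gamma> e)} = 2)"

fun res0 :: "'p quad \<Rightarrow> ('p \<times> 'p) set" where
  "res0 (a, b, c, d) = {(a, c), (c, a), (b, d), (d, b)}"

fun res1 :: "'p quad \<Rightarrow> ('p \<times> 'p) set" where
  "res1 (a, b, c, d) = {(a, d), (d, a), (b, c), (c, b)}"

definition curve_rel :: "('p, 'e, 'z) pmdrawing_scheme \<Rightarrow> ('e \<Rightarrow> bool) \<Rightarrow> ('p \<times> 'p) set" where
  "curve_rel \<Gamma> s = {(x, y). (x, y) \<in> set (arcs \<Gamma>) \<or> (y, x) \<in> set (arcs \<Gamma>)} \<union>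
     (\<Union>e \<in> medges \<Gamma>. if s e then res1 (quad \<Gamma> e) else res0 (quad \<Gamma> e))"

definition ncurves :: "('p, 'e, 'z) pmdrawing_scheme \<Rightarrow> ('e \<Rightarrow> bool) \<Rightarrow> nat" where
  "ncurves \<Gamma> s = nloops \<Gamma> + card (pts \<Gamma> // (curve_rel \<Gamma> s)\<^sup>*)"

definition states :: "('p, 'e, 'z) pmdrawing_scheme \<Rightarrow> ('e \<Rightarrow> bool) set" where
  "states \<Gamma> = Pi\<^sub>E (medges \<Gamma>) (\<lambda>_. UNIV)"

text \<open>The 2-factor bracket, an element of Z[z,z^-1] (z = fls_X).\<close>
definition bracket2 :: "('p, 'e, 'z) pmdrawing_scheme \<Rightarrow> int fls" where
  "bracket2 \<Gamma> = (\<Sum>s \<in> states \<Gamma>.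
      (- fls_X) ^ card {e \<in> medges \<Gamma>. s e} * (fls_X + fls_X_inv) ^ ncurves \<Gamma> s)"

record ('v, 'h) dgraph =
  verts :: "'v set"
  darts :: "'h set"
  vert :: "'h \<Rightarrow> 'v"
  opp :: "'h \<Rightarrow> 'h"

text \<open>Edges are the orbits {h, opp h}; loops and multiple edges allowed.\<close>
definition multigraph :: "('v, 'h) dgraph \<Rightarrow> bool" where
  "multigraph G \<longleftrightarrow> finite (verts G) \<and> finite (darts G) \<and>
     (\<forall>h \<in> darts G. vert G h \<in> verts G \<and> opp G h \<in> darts G \<and> opp G h \<noteq> h \<and> opp G (opp G h) = h)"

definition darts_at :: "('v, 'h) dgraph \<Rightarrow> 'v \<Rightarrow> 'h set" where
  "darts_at G v = {h \<in> darts G. vert G h = v}"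

definition trivalent :: "('v, 'h) dgraph \<Rightarrow> bool" where
  "trivalent G \<longleftrightarrow> (\<forall>v \<in> verts G. card (darts_at G v) = 3)"

text \<open>A set of edges (spanning subgraph) is represented by its set of darts.\<close>
definition edge_set :: "('v, 'h) dgraph \<Rightarrow> 'h set \<Rightarrow> bool" where
  "edge_set G F \<longleftrightarrow> F \<subseteq> darts G \<and> (\<forall>h \<in> F. opp G h \<in> F)"

definition perfect_matching :: "('v, 'h) dgraph \<Rightarrow> 'h set \<Rightarrow> bool" where
  "perfect_matching G M \<longleftrightarrow> edge_set G M \<and> (\<forall>v \<in> verts G. card (darts_at G v \<inter> M) = 1)"

definition two_factor :: "('v, 'h) dgraph \<Rightarrow> 'h set \<Rightarrow> bool" where
  "two_factor G F \<longleftrightarrow> edge_set G F \<and> (\<forall>v \<in> verts G. card (darts_at G v \<inter> F) = 2)"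

definition num_2factors :: "('v, 'h) dgraph \<Rightarrow> 'h set \<Rightarrow> nat" where
  "num_2factors G M = card {F. two_factor G F \<and> M \<subseteq> F}"

subsection \<open>Plane embeddings as genus-0 rotation systems (combinatorial maps)\<close>

definition rotation_system :: "('v, 'h) dgraph \<Rightarrow> ('h \<Rightarrow> 'h) \<Rightarrow> bool" where
  "rotation_system G rot \<longleftrightarrow> bij_betw rot (darts G) (darts G) \<and>
     (\<forall>h \<in> darts G. vert G (rot h) = vert G h) \<and>
     (\<forall>h \<in> darts G. \<forall>h' \<in> darts G. vert G h = vert G h' \<longrightarrow> (\<exists>n. (rot ^^ n) h = h'))"

definition faces :: "('v, 'h) dgraph \<Rightarrow> ('h \<Rightarrow> 'h) \<Rightarrow> 'h set set" where
  "faces G rot = {{((rot \<circ> opp G) ^^ n) h | n. True} | h. h \<in> darts G}"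

definition vconn :: "('v, 'h) dgraph \<Rightarrow> ('v \<times> 'v) set" where
  "vconn G = {(vert G h, vert G (opp G h)) | h. h \<in> darts G}\<^sup>*"

definition ncomponents :: "('v, 'h) dgraph \<Rightarrow> nat" where
  "ncomponents G = card (verts G // vconn G)"

definition plane_embedding :: "('v, 'h) dgraph \<Rightarrow> ('h \<Rightarrow> 'h) \<Rightarrow> bool" where
  "plane_embedding G rot \<longleftrightarrow> rotation_system G rot \<and>
     int (card (verts G)) - int (card (darts G) div 2) + int (card (faces G rot))
       = 2 * int (ncomponents G)"

text \<open>j pairs the four removed darts R; the new opposite of a dart h follows
  its edge into R, jumps along the joining arc, and continues until it leaves R.\<close>
definition splice :: "('h \<Rightarrow> 'h) \<Rightarrow> 'h set \<Rightarrow> ('h \<Rightarrow> 'h) \<Rightarrow> 'h \<Rightarrow> 'h" where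
  "splice op R j h = (let x = op h in if x \<notin> R then x else
      let y = op (j x) in if y \<notin> R then y else op (j y))"

text \<open>Joining creates a vertex-free closed curve (so the result is no graph).\<close>
definition splice_closes :: "('h \<Rightarrow> 'h) \<Rightarrow> 'h set \<Rightarrow> ('h \<Rightarrow> 'h) \<Rightarrow> bool" where
  "splice_closes op R j \<longleftrightarrow>
     (\<exists>x \<in> R. op (j x) = x \<or> (op (j x) \<in> R \<and> op (j (op (j x))) = x))"

definition pairswap :: "'h \<Rightarrow> 'h \<Rightarrow> 'h \<Rightarrow> 'h \<Rightarrow> 'h \<Rightarrow> 'h" where
  "pairswap a b c d x = (if x = a then b else if x = b then a else
                         if x = c then d else if x = d then c else x)"

text \<open>Delete the matching edge (darts eu at u, ev at v) together with u, v and
  join the edges ending in a,b and those ending in c,d.\<close>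
definition join_graph :: "('v, 'h) dgraph \<Rightarrow> 'v \<Rightarrow> 'v \<Rightarrow> 'h \<Rightarrow> 'h \<Rightarrow>
    'h \<Rightarrow> 'h \<Rightarrow> 'h \<Rightarrow> 'h \<Rightarrow> ('v, 'h) dgraph" where
  "join_graph G u v eu ev a b c d =
     \<lparr> verts = verts G - {u, v},
       darts = darts G - {eu, ev, a, b, c, d},
       vert = vert G,
       opp = splice (opp G) {a, b, c, d} (pairswap a b c d) \<rparr>"

end

theory Submission
  imports Defs
begin


lemma states_split:
  assumes "e \<in> medges \<Gamma>"
  shows "sum f (states \<Gamma>) =
    (\<Sum>t\<in>states (\<Gamma>\<lparr>medges := medges \<Gamma> - {e}\<rparr>). f (t(e:=False))) +
    (\<Sum>t\<in>states (\<Gamma>\<lparr>medges := medges \<Gamma> - {e}\<rparr>). f (t(e:=True)))"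
proof -
  let ?M = "medges \<Gamma> - {e}"
  have M: "medges \<Gamma> = insert e ?M" using assms by auto
  have "states \<Gamma> = (\<lambda>(y, g). g(e := y)) ` ((UNIV::bool set) \<times> Pi\<^sub>E ?M (\<lambda>_. UNIV))"
    unfolding states_def by (subst M, rule PiE_insert_eq)
  then have "sum f (states \<Gamma>) = sum (f \<circ> (\<lambda>(y, g). g(e := y))) (UNIV \<times> Pi\<^sub>E ?M (\<lambda>_. UNIV))"
    using sum.reindex[OF inj_combinator[of e ?M "\<lambda>_. UNIV"], of f] by simp
  also have "\<dots> = (\<Sum>y\<in>UNIV. \<Sum>g\<in>Pi\<^sub>E ?M (\<lambda>_. UNIV). f (g(e:=y)))"
    by (simp add: sum.cartesian_product split_def)
  also have "\<dots> = (\<Sum>g\<in>Pi\<^sub>E ?M (\<lambda>_. UNIV). f (g(e:=False))) + (\<Sum>g\<in>Pi\<^sub>E ?M (\<lambda>_. UNIV). f (g(e:=True)))"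
    by (simp add: UNIV_bool add.commute)
  finally show ?thesis by (simp add: states_def)
qed

lemma curve_rel_upd:
  assumes "e \<in> medges \<Gamma>"
  shows "curve_rel \<Gamma> (t(e:=b)) = {(x, y). (x, y) \<in> set (arcs \<Gamma>) \<or> (y, x) \<in> set (arcs \<Gamma>)} \<union>
     (if b then res1 (quad \<Gamma> e) else res0 (quad \<Gamma> e)) \<union>
     (\<Union>e' \<in> medges \<Gamma> - {e}. if t e' then res1 (quad \<Gamma> e') else res0 (quad \<Gamma> e'))"
proof -
  have M: "medges \<Gamma> = insert e (medges \<Gamma> - {e})" using assms by auto
  have "(\<Union>e' \<in> medges \<Gamma>. if (t(e:=b)) e' then res1 (quad \<Gamma> e') else res0 (quad \<Gamma> e'))
     = (if b then res1 (quad \<Gamma> e) else res0 (quad \<Gamma> e)) \<union>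
       (\<Union>e' \<in> medges \<Gamma> - {e}. if t e' then res1 (quad \<Gamma> e') else res0 (quad \<Gamma> e'))"
    by (subst M) (auto split: if_splits)
  then show ?thesis unfolding curve_rel_def by auto
qed

lemma card_upd:
  assumes "e \<in> medges \<Gamma>" "finite (medges \<Gamma>)"
  shows "card {e' \<in> medges \<Gamma>. (t(e:=b)) e'} = card {e' \<in> medges \<Gamma> - {e}. t e'} + (if b then 1 else 0)"
proof -
  have "{e' \<in> medges \<Gamma>. (t(e:=b)) e'} = (if b then insert e {e' \<in> medges \<Gamma> - {e}. t e'} else {e' \<in> medges \<Gamma> - {e}. t e'})"
    using assms by auto
  then show ?thesis using assms by simp
qed

lemma part_a:
  fixes \<Gamma> :: "('p, 'e) pmdrawing"
  assumes "pm_drawing \<Gamma>" "e \<in> medges \<Gamma>" "quad \<Gamma> e = (\<alpha>, \<beta>, \<gamma>, \<delta>)"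
  shows "bracket2 \<Gamma> - bracket2 (\<Gamma>\<lparr>quad := (quad \<Gamma>)(e := (\<gamma>, \<alpha>, \<delta>, \<beta>))\<rparr>)
      = bracket2 (\<Gamma>\<lparr>arcs := arcs \<Gamma> @ [(\<alpha>, \<gamma>), (\<beta>, \<delta>)], medges := medges \<Gamma> - {e}\<rparr>)
        - bracket2 (\<Gamma>\<lparr>arcs := arcs \<Gamma> @ [(\<alpha>, \<beta>), (\<gamma>, \<delta>)], medges := medges \<Gamma> - {e}\<rparr>)"
proof -
  define H where "H = \<Gamma>\<lparr>quad := (quad \<Gamma>)(e := (\<gamma>, \<alpha>, \<delta>, \<beta>))\<rparr>"
  define I where "I = \<Gamma>\<lparr>arcs := arcs \<Gamma> @ [(\<alpha>, \<gamma>), (\<beta>, \<delta>)], medges := medges \<Gamma> - {e}\<rparr>"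
  define E where "E = \<Gamma>\<lparr>arcs := arcs \<Gamma> @ [(\<alpha>, \<beta>), (\<gamma>, \<delta>)], medges := medges \<Gamma> - {e}\<rparr>"
  define S where "S = states (\<Gamma>\<lparr>medges := medges \<Gamma> - {e}\<rparr>)"
  have fin: "finite (medges \<Gamma>)" using assms(1) by (simp add: pm_drawing_def)
  define z :: "int fls" where "z = fls_X"
  define w :: "int fls" where "w = fls_X + fls_X_inv"
  define k where "k t = card {e' \<in> medges \<Gamma> - {e}. t e'}" for t :: "'e \<Rightarrow> bool"
  have SI: "states I = S" and SE: "states E = S" by (simp_all add: S_def I_def E_def states_def)
  have HM: "medges H = medges \<Gamma>" "e \<in> medges H" "\<Gamma>\<lparr>medges := medges \<Gamma> - {e}\<rparr> = H\<lparr>medges := medges H - {e}\<rparr> \<Longrightarrow> True"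
    using assms by (simp_all add: H_def)
  have SH: "states (H\<lparr>medges := medges H - {e}\<rparr>) = S" by (simp add: S_def H_def states_def)
  have sym_app: "\<And>A x y x' y'. {(p, q). (p, q) \<in> set (A @ [(x, y), (x', y')]) \<or> (q, p) \<in> set (A @ [(x, y), (x', y')])}
      = {(p, q). (p, q) \<in> set A \<or> (q, p) \<in> set A} \<union> {(x,y),(y,x),(x',y'),(y',x')}"
    by auto
  have cI: "curve_rel \<Gamma> (t(e:=False)) = curve_rel I t" for t
    using assms(2,3) unfolding curve_rel_upd[OF assms(2)] by (auto simp: I_def curve_rel_def)
  have cE: "curve_rel H (t(e:=False)) = curve_rel E t" for t
    using assms(2,3) unfolding curve_rel_upd[OF HM(2)] by (auto simp: H_def E_def curve_rel_def)
  have cX: "curve_rel \<Gamma> (t(e:=True)) = curve_rel H (t(e:=True))" for t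
    using assms(2,3) unfolding curve_rel_upd[OF assms(2)] curve_rel_upd[OF HM(2)]
    by (auto simp: H_def)
  have nI: "ncurves \<Gamma> (t(e:=False)) = ncurves I t" for t
    using cI[of t] by (simp add: ncurves_def I_def)
  have nE: "ncurves H (t(e:=False)) = ncurves E t" for t
    using cE[of t] by (simp add: ncurves_def H_def E_def)
  have nX: "ncurves \<Gamma> (t(e:=True)) = ncurves H (t(e:=True))" for t
    using cX[of t] by (simp add: ncurves_def H_def)
  have kI: "card {e' \<in> medges I. t e'} = k t" for t by (simp add: I_def k_def)
  have kE: "card {e' \<in> medges E. t e'} = k t" for t by (simp add: E_def k_def)
  have bG: "bracket2 \<Gamma> = (\<Sum>t\<in>S. (- z) ^ k t * w ^ ncurves I t) +
       (\<Sum>t\<in>S. (- z) ^ (k t + 1) * w ^ ncurves \<Gamma> (t(e:=True)))"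
    unfolding bracket2_def states_split[OF assms(2)] S_def[symmetric] card_upd[OF assms(2) fin]
    by (simp add: nI z_def w_def k_def)
  have bH: "bracket2 H = (\<Sum>t\<in>S. (- z) ^ k t * w ^ ncurves E t) +
       (\<Sum>t\<in>S. (- z) ^ (k t + 1) * w ^ ncurves \<Gamma> (t(e:=True)))"
    unfolding bracket2_def states_split[OF HM(2)] SH card_upd[OF HM(2) fin[folded HM(1)]]
    by (simp add: nE nX z_def w_def k_def HM(1))
  have bI: "bracket2 I = (\<Sum>t\<in>S. (- z) ^ k t * w ^ ncurves I t)"
    unfolding bracket2_def SI kI z_def w_def ..
  have bE: "bracket2 E = (\<Sum>t\<in>S. (- z) ^ k t * w ^ ncurves E t)"
    unfolding bracket2_def SE kE z_def w_def ..
  show ?thesis using bG bH bI bE unfolding H_def[symmetric] I_def[symmetric] E_def[symmetric]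
    by simp
qed



lemma config:
  fixes f :: "'h \<Rightarrow> 'h"
  assumes dist: "distinct [a,b,c,d]"
    and inv: "\<forall>r\<in>{a,b,c,d}. f (f r) = r \<and> f r \<noteq> r"
    and nc3: "\<not> splice_closes f {a,b,c,d} (pairswap a c b d)"
    and nc4: "\<not> splice_closes f {a,b,c,d} (pairswap a b c d)"
  shows "(f a \<notin> {a,b,c,d} \<and> f b \<notin> {a,b,c,d} \<and> f c \<notin> {a,b,c,d} \<and> f d \<notin> {a,b,c,d}) \<or>
         (f a = d \<and> f d = a \<and> f b \<notin> {a,b,c,d} \<and> f c \<notin> {a,b,c,d}) \<or>
         (f b = c \<and> f c = b \<and> f a \<notin> {a,b,c,d} \<and> f d \<notin> {a,b,c,d})"
proof -
  have p3: "pairswap a c b d a = c" "pairswap a c b d c = a" "pairswap a c b d b = d" "pairswap a c b d d = b"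
    and p4: "pairswap a b c d a = b" "pairswap a b c d b = a" "pairswap a b c d c = d" "pairswap a b c d d = c"
    using dist by (auto simp: pairswap_def)
  have n3: "\<And>x. x \<in> {a,b,c,d} \<Longrightarrow> f (pairswap a c b d x) \<noteq> x"
    using nc3 unfolding splice_closes_def by blast
  have n4: "\<And>x. x \<in> {a,b,c,d} \<Longrightarrow> f (pairswap a b c d x) \<noteq> x"
    using nc4 unfolding splice_closes_def by blast
  have n3': "\<And>x. x \<in> {a,b,c,d} \<Longrightarrow> f (pairswap a c b d x) \<in> {a,b,c,d} \<Longrightarrow> f (pairswap a c b d (f (pairswap a c b d x))) \<noteq> x"
    using nc3 unfolding splice_closes_def by blast
  have "f a \<noteq> b" using n4[of b] p4 by auto
  moreover have "f a \<noteq> c" using n3[of c] p3 by auto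
  moreover have "f b \<noteq> d" using n3[of d] p3 by auto
  moreover have "f c \<noteq> d" using n4[of d] p4 by auto
  moreover have "\<not> (f a = d \<and> f b = c)" using n3'[of a] p3 inv by auto
  ultimately show ?thesis using inv dist by auto
qed

definition Qp :: "('h \<Rightarrow> 'h) \<Rightarrow> 'h set \<Rightarrow> 'h set \<Rightarrow> 'h set \<Rightarrow> bool" where
  "Qp f R X P \<longleftrightarrow> (\<forall>r\<in>R. f r \<in> X \<longrightarrow> r \<in> P) \<and> (\<forall>r\<in>P. f r \<in> X \<or> f r \<in> P)"

definition Cp :: "('h \<Rightarrow> 'h) \<Rightarrow> 'h set \<Rightarrow> ('h \<Rightarrow> 'h) \<Rightarrow> 'h set \<Rightarrow> bool" where
  "Cp f R j X \<longleftrightarrow> (\<forall>r\<in>R. f r \<in> X \<longrightarrow> splice f R j (f r) \<in> X)"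

lemma core:
  fixes f :: "'h \<Rightarrow> 'h"
  assumes dist: "distinct [a,b,c,d]"
    and inv: "\<forall>r\<in>{a,b,c,d}. f (f r) = r \<and> f r \<noteq> r"
    and XR: "\<forall>r\<in>{a,b,c,d}. r \<notin> X"
    and nc3: "\<not> splice_closes f {a,b,c,d} (pairswap a c b d)"
    and nc4: "\<not> splice_closes f {a,b,c,d} (pairswap a b c d)"
  shows "of_bool (Qp f {a,b,c,d} X {a,c}) + of_bool (Qp f {a,b,c,d} X {b,d})
       - of_bool (Qp f {a,b,c,d} X {a,b}) - of_bool (Qp f {a,b,c,d} X {c,d})
       = (of_bool (Cp f {a,b,c,d} (pairswap a c b d) X) - of_bool (Cp f {a,b,c,d} (pairswap a b c d) X) :: int)"
proof -
  have p3: "pairswap a c b d a = c" "pairswap a c b d c = a" "pairswap a c b d b = d" "pairswap a c b d d = b"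
    and p4: "pairswap a b c d a = b" "pairswap a b c d b = a" "pairswap a b c d c = d" "pairswap a b c d d = c"
    using dist by (auto simp: pairswap_def)
  have ff: "f (f a) = a" "f (f b) = b" "f (f c) = c" "f (f d) = d" using inv by auto
  from config[OF dist inv nc3 nc4] show ?thesis
  proof (elim disjE conjE)
    assume h: "f a \<notin> {a,b,c,d}" "f b \<notin> {a,b,c,d}" "f c \<notin> {a,b,c,d}" "f d \<notin> {a,b,c,d}"
    show ?thesis
      using h dist XR unfolding Qp_def Cp_def splice_def
      by (cases "f a \<in> X"; cases "f b \<in> X"; cases "f c \<in> X"; cases "f d \<in> X") (auto simp: p3 p4 ff)
  next
    assume h: "f a = d" "f d = a" "f b \<notin> {a,b,c,d}" "f c \<notin> {a,b,c,d}"
    show ?thesis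
      using h dist XR unfolding Qp_def Cp_def splice_def
      by (cases "f b \<in> X"; cases "f c \<in> X") (auto simp: p3 p4 ff)
  next
    assume h: "f b = c" "f c = b" "f a \<notin> {a,b,c,d}" "f d \<notin> {a,b,c,d}"
    show ?thesis
      using h dist XR unfolding Qp_def Cp_def splice_def
      by (cases "f a \<in> X"; cases "f d \<in> X") (auto simp: p3 p4 ff)
  qed
qed

lemma count_split:
  assumes "finite D'" "finite R" "D' \<inter> R = {}" "D' \<inter> E = {}" "E \<inter> R = {}"
    and "\<forall>F\<in>A. E \<subseteq> F \<and> F \<subseteq> D' \<union> E \<union> R"
  shows "card A = (\<Sum>X\<in>Pow D'. card {P\<in>Pow R. X \<union> E \<union> P \<in> A})"
proof -
  have "bij_betw (\<lambda>F. (F \<inter> D', F \<inter> R)) A (Sigma (Pow D') (\<lambda>X. {P\<in>Pow R. X \<union> E \<union> P \<in> A}))"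
  proof (rule bij_betw_byWitness[where f' = "\<lambda>(X, P). X \<union> E \<union> P"])
    show "\<forall>F\<in>A. (\<lambda>(X, P). X \<union> E \<union> P) (F \<inter> D', F \<inter> R) = F" using assms(6) by auto
    show "\<forall>p\<in>Sigma (Pow D') (\<lambda>X. {P\<in>Pow R. X \<union> E \<union> P \<in> A}). (\<lambda>F. (F \<inter> D', F \<inter> R)) ((\<lambda>(X, P). X \<union> E \<union> P) p) = p"
      using assms(3-5) by auto
    show "(\<lambda>F. (F \<inter> D', F \<inter> R)) ` A \<subseteq> Sigma (Pow D') (\<lambda>X. {P\<in>Pow R. X \<union> E \<union> P \<in> A})"
    proof
      fix p assume "p \<in> (\<lambda>F. (F \<inter> D', F \<inter> R)) ` A"
      then obtain F where F: "F \<in> A" "p = (F \<inter> D', F \<inter> R)" by auto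
      have "F \<inter> D' \<union> E \<union> F \<inter> R = F" using assms(6) F(1) by auto
      then show "p \<in> Sigma (Pow D') (\<lambda>X. {P\<in>Pow R. X \<union> E \<union> P \<in> A})" using F by auto
    qed
    show "(\<lambda>(X, P). X \<union> E \<union> P) ` Sigma (Pow D') (\<lambda>X. {P\<in>Pow R. X \<union> E \<union> P \<in> A}) \<subseteq> A" by auto
  qed
  then have "card A = card (Sigma (Pow D') (\<lambda>X. {P\<in>Pow R. X \<union> E \<union> P \<in> A}))"
    by (rule bij_betw_same_card)
  also have "\<dots> = (\<Sum>X\<in>Pow D'. card {P\<in>Pow R. X \<union> E \<union> P \<in> A})"
    using assms(1,2) by (intro card_SigmaI) auto
  finally show ?thesis .
qed

lemma count_simple:
  assumes "finite D'" "\<forall>F\<in>A. F \<subseteq> D'"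
  shows "card A = (\<Sum>X\<in>Pow D'. of_bool (X \<in> A))"
proof -
  have "card A = (\<Sum>X\<in>Pow D'. card {P\<in>Pow ({}::'a set). X \<union> {} \<union> P \<in> A})"
    by (rule count_split) (use assms in auto)
  also have "\<dots> = (\<Sum>X\<in>Pow D'. of_bool (X \<in> A))"
  proof (intro sum.cong refl)
    fix X
    show "card {P\<in>Pow ({}::'a set). X \<union> {} \<union> P \<in> A} = of_bool (X \<in> A)"
    proof (cases "X \<in> A")
      case True
      then have "{P\<in>Pow ({}::'a set). X \<union> {} \<union> P \<in> A} = {{}}" by auto
      then show ?thesis using True by simp
    qed simp
  qed
  finally show ?thesis .
qed

lemma card4:
  assumes "distinct [A, B, C, D]"
  shows "card {P \<in> {A, B, C, D}. Q P} = of_bool (Q A) + of_bool (Q B) + of_bool (Q C) + of_bool (Q D)"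
proof -
  have eq: "{P \<in> {A, B, C, D}. Q P} = (if Q A then {A} else {}) \<union> (if Q B then {B} else {}) \<union>
     (if Q C then {C} else {}) \<union> (if Q D then {D} else {})" by auto
  show ?thesis unfolding eq
    using assms by (cases "Q A"; cases "Q B"; cases "Q C"; cases "Q D") (auto simp: card_insert_if)
qed

lemma Qred:
  assumes ff: "\<forall>h\<in>X \<union> R. f (f h) = h" and XR: "X \<inter> R = {}" and PR: "P \<subseteq> R"
  shows "(\<forall>h\<in>X \<union> P. f h \<in> X \<union> P) \<longleftrightarrow> (\<forall>h\<in>X. f h \<notin> R \<longrightarrow> f h \<in> X) \<and> Qp f R X P"
proof
  assume H: "\<forall>h\<in>X \<union> P. f h \<in> X \<union> P"
  have 1: "\<forall>h\<in>X. f h \<notin> R \<longrightarrow> f h \<in> X" using H PR by blast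
  have 2: "r \<in> P" if "r \<in> R" "f r \<in> X" for r
  proof -
    have "f (f r) \<in> X \<union> P" using H that(2) by blast
    then have "r \<in> X \<union> P" using ff that(1) by simp
    then show ?thesis using XR that(1) by blast
  qed
  have 3: "f r \<in> X \<or> f r \<in> P" if "r \<in> P" for r using H that by blast
  show "(\<forall>h\<in>X. f h \<notin> R \<longrightarrow> f h \<in> X) \<and> Qp f R X P" using 1 2 3 unfolding Qp_def by blast
next
  assume H: "(\<forall>h\<in>X. f h \<notin> R \<longrightarrow> f h \<in> X) \<and> Qp f R X P"
  show "\<forall>h\<in>X \<union> P. f h \<in> X \<union> P"
  proof
    fix h assume h: "h \<in> X \<union> P"
    show "f h \<in> X \<union> P"
    proof (cases "h \<in> X")
      case True
      show ?thesis
      proof (cases "f h \<in> R")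
        case True
        have "f (f h) \<in> X" using ff \<open>h \<in> X\<close> by simp
        then show ?thesis using H True unfolding Qp_def by blast
      next
        case False then show ?thesis using H \<open>h \<in> X\<close> by blast
      qed
    next
      case False then have "h \<in> P" using h by blast
      then show ?thesis using H unfolding Qp_def by blast
    qed
  qed
qed

lemma Cred:
  assumes ff: "\<forall>h\<in>X \<union> R. f (f h) = h"
  shows "(\<forall>h\<in>X. splice f R j h \<in> X) \<longleftrightarrow> (\<forall>h\<in>X. f h \<notin> R \<longrightarrow> f h \<in> X) \<and> Cp f R j X"
proof
  assume H: "\<forall>h\<in>X. splice f R j h \<in> X"
  have "f h \<in> X" if "h \<in> X" "f h \<notin> R" for h
  proof -
    have "splice f R j h = f h" using that(2) by (simp add: splice_def Let_def)
    then show ?thesis using H that(1) by metis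
  qed
  then show "(\<forall>h\<in>X. f h \<notin> R \<longrightarrow> f h \<in> X) \<and> Cp f R j X" using H unfolding Cp_def by blast
next
  assume H: "(\<forall>h\<in>X. f h \<notin> R \<longrightarrow> f h \<in> X) \<and> Cp f R j X"
  show "\<forall>h\<in>X. splice f R j h \<in> X"
  proof
    fix h assume h: "h \<in> X"
    show "splice f R j h \<in> X"
    proof (cases "f h \<in> R")
      case True
      have "f (f h) = h" using ff h by simp
      then show ?thesis using H True h unfolding Cp_def by metis
    next
      case False then show ?thesis using H h by (simp add: splice_def)
    qed
  qed
qed

lemma Pchoice:
  assumes dist: "distinct [eu, ev, x1, x2, y1, y2]" and PR: "P \<subseteq> {x1, x2, y1, y2}"
  shows "(card (insert eu ({x1, x2} \<inter> P)) = 2 \<and> card (insert ev ({y1, y2} \<inter> P)) = 2) \<longleftrightarrow>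
         P \<in> {{x1, y1}, {x1, y2}, {x2, y1}, {x2, y2}}"
proof
  assume "P \<in> {{x1, y1}, {x1, y2}, {x2, y1}, {x2, y2}}"
  then show "card (insert eu ({x1, x2} \<inter> P)) = 2 \<and> card (insert ev ({y1, y2} \<inter> P)) = 2"
    using dist by (elim insertE; auto simp: Int_insert_left Int_insert_right)
next
  assume c: "card (insert eu ({x1, x2} \<inter> P)) = 2 \<and> card (insert ev ({y1, y2} \<inter> P)) = 2"
  have eq: "P = (if x1 \<in> P then {x1} else {}) \<union> (if x2 \<in> P then {x2} else {}) \<union>
      (if y1 \<in> P then {y1} else {}) \<union> (if y2 \<in> P then {y2} else {})" using PR by auto
  have i1: "{x1, x2} \<inter> P = (if x1 \<in> P then {x1} else {}) \<union> (if x2 \<in> P then {x2} else {})" by auto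
  have i2: "{y1, y2} \<inter> P = (if y1 \<in> P then {y1} else {}) \<union> (if y2 \<in> P then {y2} else {})" by auto
  have a: "(x1 \<in> P) \<noteq> (x2 \<in> P)" using c dist unfolding i1
    by (cases "x1 \<in> P"; cases "x2 \<in> P") (auto simp: card_insert_if)
  have b: "(y1 \<in> P) \<noteq> (y2 \<in> P)" using c dist unfolding i2
    by (cases "y1 \<in> P"; cases "y2 \<in> P") (auto simp: card_insert_if)
  show "P \<in> {{x1, y1}, {x1, y2}, {x2, y1}, {x2, y2}}"
    using a b by (subst eq; cases "x1 \<in> P"; cases "y1 \<in> P") (simp_all add: insert_commute)
qed

lemma char12:
  fixes H :: "('v, 'h) dgraph"
  assumes ff: "\<forall>h\<in>darts H. opp H (opp H h) = h"
    and eu: "eu \<in> darts H" "opp H eu = ev" "opp H ev = eu"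
    and du: "darts_at H u = {eu, x1, x2}" and dv: "darts_at H v = {ev, y1, y2}"
    and dist: "distinct [eu, ev, x1, x2, y1, y2]"
    and other: "\<forall>w\<in>verts H - {u, v}. darts_at H w \<subseteq> D'"
    and D'def: "D' = darts H - {eu, ev, x1, x2, y1, y2}"
    and M: "M \<subseteq> darts H" "eu \<in> M" "ev \<in> M" "M \<inter> {x1, x2, y1, y2} = {}"
    and X: "X \<subseteq> D'" and PR: "P \<subseteq> {x1, x2, y1, y2}"
    and uv: "u \<in> verts H" "v \<in> verts H" "u \<noteq> v"
  shows "(two_factor H (X \<union> {eu, ev} \<union> P) \<and> M \<subseteq> X \<union> {eu, ev} \<union> P) \<longleftrightarrow>
         (M - {eu, ev} \<subseteq> X \<and> (\<forall>w\<in>verts H - {u, v}. card (darts_at H w \<inter> X) = 2) \<and>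
          (\<forall>h\<in>X \<union> P. opp H h \<in> X \<union> P) \<and> P \<in> {{x1, y1}, {x1, y2}, {x2, y1}, {x2, y2}})"
proof -
  let ?F = "X \<union> {eu, ev} \<union> P"
  have Rd: "{x1, x2, y1, y2} \<subseteq> darts H" using du dv unfolding darts_at_def by blast
  have evd: "ev \<in> darts H" using dv unfolding darts_at_def by blast
  have Fd: "?F \<subseteq> darts H" using X D'def Rd PR eu evd by blast
  have XP: "X \<inter> {eu, ev, x1, x2, y1, y2} = {}" using X D'def by blast
  have oE: "opp H h \<notin> {eu, ev}" if "h \<in> X \<union> P" for h
  proof
    assume "opp H h \<in> {eu, ev}"
    then have "opp H (opp H h) \<in> {eu, ev}" using eu by auto
    moreover have "h \<in> darts H" using that Fd by blast
    ultimately have "h \<in> {eu, ev}" using ff by auto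
    then show False using that XP PR dist by auto
  qed
  have es: "edge_set H ?F \<longleftrightarrow> (\<forall>h\<in>X \<union> P. opp H h \<in> X \<union> P)"
    unfolding edge_set_def using Fd oE eu by auto
  have dw: "darts_at H w \<inter> ?F = darts_at H w \<inter> X" if "w \<in> verts H - {u, v}" for w
    using other that D'def PR by blast
  have duF: "darts_at H u \<inter> ?F = insert eu ({x1, x2} \<inter> P)" using du XP dist by auto
  have dvF: "darts_at H v \<inter> ?F = insert ev ({y1, y2} \<inter> P)" using dv XP dist by auto
  have deg: "(\<forall>w\<in>verts H. card (darts_at H w \<inter> ?F) = 2) \<longleftrightarrow>
      (\<forall>w\<in>verts H - {u, v}. card (darts_at H w \<inter> X) = 2) \<and>
      card (insert eu ({x1, x2} \<inter> P)) = 2 \<and> card (insert ev ({y1, y2} \<inter> P)) = 2"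
  proof
    assume A: "\<forall>w\<in>verts H. card (darts_at H w \<inter> ?F) = 2"
    show "(\<forall>w\<in>verts H - {u, v}. card (darts_at H w \<inter> X) = 2) \<and>
      card (insert eu ({x1, x2} \<inter> P)) = 2 \<and> card (insert ev ({y1, y2} \<inter> P)) = 2"
    proof (intro conjI ballI)
      fix w assume w: "w \<in> verts H - {u, v}"
      show "card (darts_at H w \<inter> X) = 2" using A dw[OF w] w by force
    next
      show "card (insert eu ({x1, x2} \<inter> P)) = 2" using A duF uv by force
    next
      show "card (insert ev ({y1, y2} \<inter> P)) = 2" using A dvF uv by force
    qed
  next
    assume A: "(\<forall>w\<in>verts H - {u, v}. card (darts_at H w \<inter> X) = 2) \<and>
      card (insert eu ({x1, x2} \<inter> P)) = 2 \<and> card (insert ev ({y1, y2} \<inter> P)) = 2"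
    show "\<forall>w\<in>verts H. card (darts_at H w \<inter> ?F) = 2"
    proof
      fix w assume w: "w \<in> verts H"
      show "card (darts_at H w \<inter> ?F) = 2"
      proof (cases "w = u \<or> w = v")
        case True then show ?thesis using A duF dvF by auto
      next
        case False then show ?thesis using A dw w by auto
      qed
    qed
  qed
  have Ms: "M \<subseteq> ?F \<longleftrightarrow> M - {eu, ev} \<subseteq> X" using M PR by auto
  show ?thesis unfolding two_factor_def es deg Ms Pchoice[OF dist PR] by blast
qed

lemma char3:
  fixes G :: "('v, 'h) dgraph"
  assumes D'def: "D' = darts G - {eu, ev, a, b, c, d}"
    and other: "\<forall>w\<in>verts G - {u, v}. darts_at G w \<subseteq> D'"
  shows "(two_factor (join_graph G u v eu ev a b c d) X \<and> M - {eu, ev} \<subseteq> X) \<longleftrightarrow>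
     (X \<subseteq> D' \<and> M - {eu, ev} \<subseteq> X \<and> (\<forall>w\<in>verts G - {u, v}. card (darts_at G w \<inter> X) = 2) \<and>
      (\<forall>h\<in>X. splice (opp G) {a, b, c, d} (pairswap a b c d) h \<in> X))"
proof -
  let ?J = "join_graph G u v eu ev a b c d"
  have J: "darts ?J = D'" "verts ?J = verts G - {u, v}"
    "opp ?J = splice (opp G) {a, b, c, d} (pairswap a b c d)"
    using D'def by (simp_all add: join_graph_def)
  have dJ: "darts_at ?J w = darts_at G w" if "w \<in> verts G - {u, v}" for w
    using other that D'def unfolding darts_at_def join_graph_def by auto
  show ?thesis unfolding two_factor_def edge_set_def J using dJ by auto
qed

lemma filt:
  assumes "\<And>P. P \<subseteq> R \<Longrightarrow> (\<Phi> P \<longleftrightarrow> b \<and> Q P \<and> P \<in> L)" "L \<subseteq> Pow R"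
  shows "{P\<in>Pow R. \<Phi> P} = (if b then {P\<in>L. Q P} else {})"
  using assms by auto

lemma fin_arith:
  fixes q1 q2 q3 q4 q5 q6 c3 c4 :: bool
  assumes "of_bool q1 + of_bool q4 - of_bool q5 - of_bool q6 = (of_bool c3 - of_bool c4 :: int)"
  shows "int (of_bool q1 + of_bool q2 + of_bool q3 + of_bool q4) - int (of_bool q5 + of_bool q2 + of_bool q3 + of_bool q6)
     = of_bool c3 - of_bool c4"
  using assms by simp

lemma part_b:
  fixes G :: "('v, 'h) dgraph"
  assumes mg: "multigraph G" and tri: "trivalent G" and pm: "perfect_matching G M"
    and euM: "eu \<in> M" and evd: "ev = opp G eu" and ud: "u = vert G eu" and vd: "v = vert G ev"
    and du: "darts_at G u = {eu, \<alpha>, \<beta>}" and dv: "darts_at G v = {ev, \<gamma>, \<delta>}"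
    and nc3: "\<not> splice_closes (opp G) {\<alpha>, \<beta>, \<gamma>, \<delta>} (pairswap \<alpha> \<gamma> \<beta> \<delta>)"
    and nc4: "\<not> splice_closes (opp G) {\<alpha>, \<beta>, \<gamma>, \<delta>} (pairswap \<alpha> \<beta> \<gamma> \<delta>)"
  shows "int (num_2factors G M)
        - int (num_2factors (G\<lparr>vert := (vert G)(\<gamma> := u, \<beta> := v)\<rparr>) M)
      = int (num_2factors (join_graph G u v eu ev \<alpha> \<gamma> \<beta> \<delta>) (M - {eu, ev}))
        - int (num_2factors (join_graph G u v eu ev \<alpha> \<beta> \<gamma> \<delta>) (M - {eu, ev}))"
proof -
  define f where "f = opp G"
  define D where "D = darts G"
  define V where "V = verts G"
  define R where "R = {\<alpha>, \<beta>, \<gamma>, \<delta>}"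
  define E where "E = {eu, ev}"
  define D' where "D' = D - {eu, ev, \<alpha>, \<beta>, \<gamma>, \<delta>}"
  define G2 where "G2 = G\<lparr>vert := (vert G)(\<gamma> := u, \<beta> := v)\<rparr>"
  have finV: "finite V" and finD: "finite D"
    and mgD: "\<And>h. h \<in> D \<Longrightarrow> vert G h \<in> V \<and> f h \<in> D \<and> f h \<noteq> h \<and> f (f h) = h"
    using mg unfolding multigraph_def f_def D_def V_def by auto
  have MD: "M \<subseteq> D" and Mc: "\<And>h. h \<in> M \<Longrightarrow> f h \<in> M"
    and Mdeg: "\<And>w. w \<in> V \<Longrightarrow> card (darts_at G w \<inter> M) = 1"
    using pm unfolding perfect_matching_def edge_set_def f_def D_def V_def by auto
  have euD: "eu \<in> D" using euM MD by auto
  have evD: "ev \<in> D" and evM: "ev \<in> M" and fev: "f ev = eu" and feu: "f eu = ev"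
    using mgD[OF euD] Mc[OF euM] evd by (auto simp: f_def)
  have uV: "u \<in> V" and vV: "v \<in> V" using mgD[OF euD] mgD[OF evD] ud vd by auto
  have eune: "eu \<noteq> ev" using mgD[OF euD] feu by auto
  have uv: "u \<noteq> v"
  proof
    assume "u = v"
    then have "{eu, ev} \<subseteq> darts_at G u \<inter> M" using euM evM euD evD ud vd
      unfolding darts_at_def D_def by auto
    moreover have "finite (darts_at G u \<inter> M)" using finD MD finite_subset by blast
    ultimately have "card {eu, ev} \<le> 1" using Mdeg[OF uV] card_mono by metis
    then show False using eune by simp
  qed
  have c3u: "card {eu, \<alpha>, \<beta>} = 3" using tri uV du unfolding trivalent_def V_def by metis
  have c3v: "card {ev, \<gamma>, \<delta>} = 3" using tri vV dv unfolding trivalent_def V_def by metis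
  have d3u: "distinct [eu, \<alpha>, \<beta>]" using c3u by (auto simp: card_insert_if split: if_splits)
  have d3v: "distinct [ev, \<gamma>, \<delta>]" using c3v by (auto simp: card_insert_if split: if_splits)
  have vu: "\<And>h. h \<in> {eu, \<alpha>, \<beta>} \<Longrightarrow> vert G h = u \<and> h \<in> D"
    using du unfolding darts_at_def D_def by blast
  have vv: "\<And>h. h \<in> {ev, \<gamma>, \<delta>} \<Longrightarrow> vert G h = v \<and> h \<in> D"
    using dv unfolding darts_at_def D_def by blast
  have dist: "distinct [eu, ev, \<alpha>, \<beta>, \<gamma>, \<delta>]"
    using d3u d3v vu vv uv eune by auto
  have RD: "R \<subseteq> D" using vu vv R_def by auto
  have notM: "x \<notin> M" if "x \<in> R" for x
  proof
    assume xM: "x \<in> M"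
    have "x \<in> {eu, \<alpha>, \<beta>} \<or> x \<in> {ev, \<gamma>, \<delta>}" using that R_def by auto
    then show False
    proof
      assume xu: "x \<in> {eu, \<alpha>, \<beta>}"
      have "{eu, x} \<subseteq> darts_at G u \<inter> M" using xu du xM euM by auto
      moreover have "finite (darts_at G u \<inter> M)" using finD MD finite_subset by blast
      ultimately have "card {eu, x} \<le> 1" using Mdeg[OF uV] card_mono by metis
      moreover have "x \<noteq> eu" using that dist R_def by auto
      ultimately show False by simp
    next
      assume xv: "x \<in> {ev, \<gamma>, \<delta>}"
      have "{ev, x} \<subseteq> darts_at G v \<inter> M" using xv dv xM evM by auto
      moreover have "finite (darts_at G v \<inter> M)" using finD MD finite_subset by blast
      ultimately have "card {ev, x} \<le> 1" using Mdeg[OF vV] card_mono by metis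
      moreover have "x \<noteq> ev" using that dist R_def by auto
      ultimately show False by simp
    qed
  qed
  have MR: "M \<inter> {\<alpha>, \<beta>, \<gamma>, \<delta>} = {}" using notM R_def by auto
  have other: "\<forall>w\<in>V - {u, v}. darts_at G w \<subseteq> D'"
    using vu vv unfolding darts_at_def D'_def D_def by auto
  have ffD: "\<forall>h\<in>D. f (f h) = h" using mgD by auto
  have G2: "darts G2 = D" "opp G2 = f" "verts G2 = V" by (simp_all add: G2_def D_def f_def V_def)
  have du2: "darts_at G2 u = {eu, \<alpha>, \<gamma>}" using du dv dist uv vu vv
    unfolding darts_at_def G2_def D_def by auto
  have dv2: "darts_at G2 v = {ev, \<beta>, \<delta>}" using du dv dist uv vu vv
    unfolding darts_at_def G2_def D_def by auto
  have dw2: "darts_at G2 w = darts_at G w" if "w \<in> V - {u, v}" for w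
    using that vu vv unfolding darts_at_def G2_def by auto
  have other2: "\<forall>w\<in>verts G2 - {u, v}. darts_at G2 w \<subseteq> D'" using other dw2 G2 by auto
  define A1 where "A1 = {F. two_factor G F \<and> M \<subseteq> F}"
  define A2 where "A2 = {F. two_factor G2 F \<and> M \<subseteq> F}"
  define A3 where "A3 = {F. two_factor (join_graph G u v eu ev \<alpha> \<gamma> \<beta> \<delta>) F \<and> M - {eu, ev} \<subseteq> F}"
  define A4 where "A4 = {F. two_factor (join_graph G u v eu ev \<alpha> \<beta> \<gamma> \<delta>) F \<and> M - {eu, ev} \<subseteq> F}"
  have finD': "finite D'" using finD D'_def by auto
  have finR: "finite R" by (simp add: R_def)
  have disj: "D' \<inter> R = {}" "D' \<inter> E = {}" "E \<inter> R = {}"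
    using dist by (auto simp: D'_def R_def E_def)
  have cover: "D = D' \<union> E \<union> R" using RD euD evD by (auto simp: D'_def R_def E_def)
  have A1s: "\<forall>F\<in>A1. E \<subseteq> F \<and> F \<subseteq> D' \<union> E \<union> R"
    using euM evM cover unfolding A1_def two_factor_def edge_set_def E_def D_def by auto
  have A2s: "\<forall>F\<in>A2. E \<subseteq> F \<and> F \<subseteq> D' \<union> E \<union> R"
    using euM evM cover G2 unfolding A2_def two_factor_def edge_set_def E_def by auto
  have A3s: "\<forall>F\<in>A3. F \<subseteq> D'"
    unfolding A3_def two_factor_def edge_set_def by (auto simp: join_graph_def D'_def D_def)
  have A4s: "\<forall>F\<in>A4. F \<subseteq> D'"
    unfolding A4_def two_factor_def edge_set_def by (auto simp: join_graph_def D'_def D_def)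
  have n1: "card A1 = (\<Sum>X\<in>Pow D'. card {P\<in>Pow R. X \<union> E \<union> P \<in> A1})"
    by (rule count_split[OF finD' finR disj A1s])
  have n2: "card A2 = (\<Sum>X\<in>Pow D'. card {P\<in>Pow R. X \<union> E \<union> P \<in> A2})"
    by (rule count_split[OF finD' finR disj A2s])
  have n3: "card A3 = (\<Sum>X\<in>Pow D'. of_bool (X \<in> A3))" by (rule count_simple[OF finD' A3s])
  have n4: "card A4 = (\<Sum>X\<in>Pow D'. of_bool (X \<in> A4))" by (rule count_simple[OF finD' A4s])
  have pw: "int (card {P\<in>Pow R. X \<union> E \<union> P \<in> A1}) - int (card {P\<in>Pow R. X \<union> E \<union> P \<in> A2})
      = of_bool (X \<in> A3) - of_bool (X \<in> A4)" if X: "X \<in> Pow D'" for X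
  proof -
    define B where "B = (M - {eu, ev} \<subseteq> X \<and> (\<forall>w\<in>V - {u, v}. card (darts_at G w \<inter> X) = 2) \<and>
        (\<forall>h\<in>X. f h \<notin> R \<longrightarrow> f h \<in> X))"
    define Q where "Q = Qp f R X"
    have XD': "X \<subseteq> D'" using X by auto
    have XR: "X \<inter> R = {}" using XD' disj by auto
    have ffXR: "\<forall>h\<in>X \<union> R. f (f h) = h" using ffD XD' RD D'_def by auto
    have R2: "{\<alpha>, \<gamma>, \<beta>, \<delta>} = R" by (auto simp: R_def)
    have D'eq: "D' = darts G - {eu, ev, \<alpha>, \<gamma>, \<beta>, \<delta>}" "D' = darts G - {eu, ev, \<alpha>, \<beta>, \<gamma>, \<delta>}"
      by (auto simp: D'_def D_def)
    have otherV: "\<forall>w\<in>verts G - {u, v}. darts_at G w \<subseteq> D'" using other by (simp add: V_def)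
    have Bc: "B \<longleftrightarrow> (M - {eu, ev} \<subseteq> X \<and> (\<forall>w\<in>verts G - {u, v}. card (darts_at G w \<inter> X) = 2)) \<and>
        (\<forall>h\<in>X. f h \<notin> R \<longrightarrow> f h \<in> X)" unfolding B_def V_def by blast
    have s1: "{P\<in>Pow R. X \<union> E \<union> P \<in> A1} = (if B then {P \<in> {{\<alpha>, \<gamma>}, {\<alpha>, \<delta>}, {\<beta>, \<gamma>}, {\<beta>, \<delta>}}. Q P} else {})"
    proof -
      have "X \<union> E \<union> P \<in> A1 \<longleftrightarrow> B \<and> Q P \<and> P \<in> {{\<alpha>, \<gamma>}, {\<alpha>, \<delta>}, {\<beta>, \<gamma>}, {\<beta>, \<delta>}}"
        if P: "P \<subseteq> R" for P
      proof -
        have PR': "P \<subseteq> {\<alpha>, \<beta>, \<gamma>, \<delta>}" using P R_def by simp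
        have c: "X \<union> E \<union> P \<in> A1 \<longleftrightarrow> (M - {eu, ev} \<subseteq> X \<and> (\<forall>w\<in>verts G - {u, v}. card (darts_at G w \<inter> X) = 2) \<and>
          (\<forall>h\<in>X \<union> P. f h \<in> X \<union> P) \<and> P \<in> {{\<alpha>, \<gamma>}, {\<alpha>, \<delta>}, {\<beta>, \<gamma>}, {\<beta>, \<delta>}})"
          unfolding A1_def E_def mem_Collect_eq f_def
          by (rule char12[OF ffD[unfolded D_def f_def] euD[unfolded D_def] feu[unfolded f_def] fev[unfolded f_def]
                du dv dist otherV D'eq(2) MD[unfolded D_def] euM evM MR XD' PR' uV[unfolded V_def] vV[unfolded V_def] uv])
        show ?thesis unfolding c Qred[OF ffXR XR P] Bc Q_def by blast
      qed
      moreover have "{{\<alpha>, \<gamma>}, {\<alpha>, \<delta>}, {\<beta>, \<gamma>}, {\<beta>, \<delta>}} \<subseteq> Pow R" by (auto simp: R_def)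
      ultimately show ?thesis by (rule filt)
    qed
    have s2: "{P\<in>Pow R. X \<union> E \<union> P \<in> A2} = (if B then {P \<in> {{\<alpha>, \<beta>}, {\<alpha>, \<delta>}, {\<gamma>, \<beta>}, {\<gamma>, \<delta>}}. Q P} else {})"
    proof -
      have d2: "distinct [eu, ev, \<alpha>, \<gamma>, \<beta>, \<delta>]" using dist by auto
      have D'2: "D' = darts G2 - {eu, ev, \<alpha>, \<gamma>, \<beta>, \<delta>}" using G2 D'_def by auto
      have MR2: "M \<inter> {\<alpha>, \<gamma>, \<beta>, \<delta>} = {}" using MR by auto
      have "X \<union> E \<union> P \<in> A2 \<longleftrightarrow> B \<and> Q P \<and> P \<in> {{\<alpha>, \<beta>}, {\<alpha>, \<delta>}, {\<gamma>, \<beta>}, {\<gamma>, \<delta>}}"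
        if P: "P \<subseteq> R" for P
      proof -
        have P2: "P \<subseteq> {\<alpha>, \<gamma>, \<beta>, \<delta>}" using P R2 by auto
        have other2': "(\<forall>w\<in>verts G2 - {u, v}. card (darts_at G2 w \<inter> X) = 2) \<longleftrightarrow>
            (\<forall>w\<in>verts G - {u, v}. card (darts_at G w \<inter> X) = 2)"
          using dw2 G2 by (simp add: V_def)
        have c: "X \<union> E \<union> P \<in> A2 \<longleftrightarrow> (M - {eu, ev} \<subseteq> X \<and> (\<forall>w\<in>verts G2 - {u, v}. card (darts_at G2 w \<inter> X) = 2) \<and>
          (\<forall>h\<in>X \<union> P. f h \<in> X \<union> P) \<and> P \<in> {{\<alpha>, \<beta>}, {\<alpha>, \<delta>}, {\<gamma>, \<beta>}, {\<gamma>, \<delta>}})"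
          unfolding A2_def E_def mem_Collect_eq G2(2)[symmetric]
          by (rule char12[OF ffD[folded G2(1,2)] euD[folded G2(1)] feu[folded G2(2)] fev[folded G2(2)]
                du2 dv2 d2 other2 D'2 MD[folded G2(1)] euM evM MR2 XD' P2 uV[folded G2(3)] vV[folded G2(3)] uv])
        show ?thesis unfolding c other2' Qred[OF ffXR XR P] Bc Q_def by blast
      qed
      moreover have "{{\<alpha>, \<beta>}, {\<alpha>, \<delta>}, {\<gamma>, \<beta>}, {\<gamma>, \<delta>}} \<subseteq> Pow R" by (auto simp: R_def)
      ultimately show ?thesis by (rule filt)
    qed
    have s3: "X \<in> A3 \<longleftrightarrow> B \<and> Cp f R (pairswap \<alpha> \<gamma> \<beta> \<delta>) X"
    proof -
      have "X \<in> A3 \<longleftrightarrow> (X \<subseteq> D' \<and> M - {eu, ev} \<subseteq> X \<and> (\<forall>w\<in>verts G - {u, v}. card (darts_at G w \<inter> X) = 2) \<and>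
          (\<forall>h\<in>X. splice f R (pairswap \<alpha> \<gamma> \<beta> \<delta>) h \<in> X))"
        unfolding A3_def mem_Collect_eq char3[OF D'eq(1) otherV] R2[symmetric] f_def ..
      then show ?thesis unfolding Cred[OF ffXR] Bc using XD' by blast
    qed
    have s4: "X \<in> A4 \<longleftrightarrow> B \<and> Cp f R (pairswap \<alpha> \<beta> \<gamma> \<delta>) X"
    proof -
      have "X \<in> A4 \<longleftrightarrow> (X \<subseteq> D' \<and> M - {eu, ev} \<subseteq> X \<and> (\<forall>w\<in>verts G - {u, v}. card (darts_at G w \<inter> X) = 2) \<and>
          (\<forall>h\<in>X. splice f R (pairswap \<alpha> \<beta> \<gamma> \<delta>) h \<in> X))"
        unfolding A4_def mem_Collect_eq char3[OF D'eq(2) otherV] R_def f_def ..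
      then show ?thesis unfolding Cred[OF ffXR] Bc using XD' by blast
    qed
    have dl1: "distinct [{\<alpha>, \<gamma>}, {\<alpha>, \<delta>}, {\<beta>, \<gamma>}, {\<beta>, \<delta>}]" using dist by (auto simp: doubleton_eq_iff)
    have dl2: "distinct [{\<alpha>, \<beta>}, {\<alpha>, \<delta>}, {\<gamma>, \<beta>}, {\<gamma>, \<delta>}]" using dist by (auto simp: doubleton_eq_iff)
    have gb: "Q {\<gamma>, \<beta>} = Q {\<beta>, \<gamma>}" by (metis insert_commute)
    have inv: "\<forall>r\<in>{\<alpha>, \<beta>, \<gamma>, \<delta>}. f (f r) = r \<and> f r \<noteq> r" using mgD RD R_def by auto
    have XR': "\<forall>r\<in>{\<alpha>, \<beta>, \<gamma>, \<delta>}. r \<notin> X" using XR R_def by auto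
    have d4: "distinct [\<alpha>, \<beta>, \<gamma>, \<delta>]" using dist by simp
    have cr: "of_bool (Q {\<alpha>, \<gamma>}) + of_bool (Q {\<beta>, \<delta>}) - of_bool (Q {\<alpha>, \<beta>}) - of_bool (Q {\<gamma>, \<delta>})
       = (of_bool (Cp f R (pairswap \<alpha> \<gamma> \<beta> \<delta>) X) - of_bool (Cp f R (pairswap \<alpha> \<beta> \<gamma> \<delta>) X) :: int)"
      unfolding Q_def R_def by (rule core[OF d4 inv XR' nc3[folded f_def] nc4[folded f_def]])
    show ?thesis
    proof (cases B)
      case True
      have e1: "card {P\<in>Pow R. X \<union> E \<union> P \<in> A1} = of_bool (Q {\<alpha>, \<gamma>}) + of_bool (Q {\<alpha>, \<delta>}) + of_bool (Q {\<beta>, \<gamma>}) + of_bool (Q {\<beta>, \<delta>})"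
        unfolding s1 using True card4[OF dl1, of Q] by simp
      have e2: "card {P\<in>Pow R. X \<union> E \<union> P \<in> A2} = of_bool (Q {\<alpha>, \<beta>}) + of_bool (Q {\<alpha>, \<delta>}) + of_bool (Q {\<beta>, \<gamma>}) + of_bool (Q {\<gamma>, \<delta>})"
        unfolding s2 using True card4[OF dl2, of Q] gb by simp
      have e3: "(X \<in> A3) = Cp f R (pairswap \<alpha> \<gamma> \<beta> \<delta>) X" "(X \<in> A4) = Cp f R (pairswap \<alpha> \<beta> \<gamma> \<delta>) X"
        using s3 s4 True by simp_all
      show ?thesis unfolding e1 e2 e3 by (rule fin_arith[OF cr])
    next
      case False
      show ?thesis unfolding s1 s2 s3 s4 using False by simp
    qed
  qed
  have "int (card A1) - int (card A2) =
      (\<Sum>X\<in>Pow D'. int (card {P\<in>Pow R. X \<union> E \<union> P \<in> A1}) - int (card {P\<in>Pow R. X \<union> E \<union> P \<in> A2}))"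
    unfolding n1 n2 of_nat_sum by (simp add: sum_subtractf)
  also have "\<dots> = (\<Sum>X\<in>Pow D'. of_bool (X \<in> A3) - of_bool (X \<in> A4))"
    by (rule sum.cong[OF refl pw])
  also have "\<dots> = int (card A3) - int (card A4)"
    unfolding n3 n4 of_nat_sum by (simp add: sum_subtractf)
  finally have "int (card A1) - int (card A2) = int (card A3) - int (card A4)" .
  then show ?thesis unfolding num_2factors_def A1_def A2_def A3_def A4_def G2_def .
qed

theorem lemma2p3:
  shows
  "(\<forall>(\<Gamma> :: ('p, 'e) pmdrawing) e \<alpha> \<beta> \<gamma> \<delta>.
      pm_drawing \<Gamma> \<and> e \<in> medges \<Gamma> \<and> quad \<Gamma> e = (\<alpha>, \<beta>, \<gamma>, \<delta>) \<longrightarrow>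
      bracket2 \<Gamma> - bracket2 (\<Gamma>\<lparr>quad := (quad \<Gamma>)(e := (\<gamma>, \<alpha>, \<delta>, \<beta>))\<rparr>)
      = bracket2 (\<Gamma>\<lparr>arcs := arcs \<Gamma> @ [(\<alpha>, \<gamma>), (\<beta>, \<delta>)], medges := medges \<Gamma> - {e}\<rparr>)
        - bracket2 (\<Gamma>\<lparr>arcs := arcs \<Gamma> @ [(\<alpha>, \<beta>), (\<gamma>, \<delta>)], medges := medges \<Gamma> - {e}\<rparr>))
   \<and>
   (\<forall>(G1 :: ('v, 'h) dgraph) rot M1 eu ev u v \<alpha> \<beta> \<gamma> \<delta>.
      multigraph G1 \<and> trivalent G1 \<and> plane_embedding G1 rot \<and> perfect_matching G1 M1 \<and>
      eu \<in> M1 \<and> ev = opp G1 eu \<and> u = vert G1 eu \<and> v = vert G1 ev \<and>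
      darts_at G1 u = {eu, \<alpha>, \<beta>} \<and> darts_at G1 v = {ev, \<gamma>, \<delta>} \<and>
      ((rot eu = \<alpha> \<and> rot ev = \<delta>) \<or> (rot eu = \<beta> \<and> rot ev = \<gamma>)) \<and>
      \<not> splice_closes (opp G1) {\<alpha>, \<beta>, \<gamma>, \<delta>} (pairswap \<alpha> \<gamma> \<beta> \<delta>) \<and>
      \<not> splice_closes (opp G1) {\<alpha>, \<beta>, \<gamma>, \<delta>} (pairswap \<alpha> \<beta> \<gamma> \<delta>) \<longrightarrow>
      int (num_2factors G1 M1)
        - int (num_2factors (G1\<lparr>vert := (vert G1)(\<gamma> := u, \<beta> := v)\<rparr>) M1)
      = int (num_2factors (join_graph G1 u v eu ev \<alpha> \<gamma> \<beta> \<delta>) (M1 - {eu, ev}))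
        - int (num_2factors (join_graph G1 u v eu ev \<alpha> \<beta> \<gamma> \<delta>) (M1 - {eu, ev})))"
proof (intro conjI allI impI)
  fix \<Gamma> :: "('p, 'e) pmdrawing" and e \<alpha> \<beta> \<gamma> \<delta>
  assume "pm_drawing \<Gamma> \<and> e \<in> medges \<Gamma> \<and> quad \<Gamma> e = (\<alpha>, \<beta>, \<gamma>, \<delta>)"
  then show "bracket2 \<Gamma> - bracket2 (\<Gamma>\<lparr>quad := (quad \<Gamma>)(e := (\<gamma>, \<alpha>, \<delta>, \<beta>))\<rparr>)
      = bracket2 (\<Gamma>\<lparr>arcs := arcs \<Gamma> @ [(\<alpha>, \<gamma>), (\<beta>, \<delta>)], medges := medges \<Gamma> - {e}\<rparr>)
        - bracket2 (\<Gamma>\<lparr>arcs := arcs \<Gamma> @ [(\<alpha>, \<beta>), (\<gamma>, \<delta>)], medges := medges \<Gamma> - {e}\<rparr>)"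
    by (elim conjE) (rule part_a)
next
  fix G1 :: "('v, 'h) dgraph" and rot M1 eu ev u v \<alpha> \<beta> \<gamma> \<delta>
  assume H: "multigraph G1 \<and> trivalent G1 \<and> plane_embedding G1 rot \<and> perfect_matching G1 M1 \<and>
      eu \<in> M1 \<and> ev = opp G1 eu \<and> u = vert G1 eu \<and> v = vert G1 ev \<and>
      darts_at G1 u = {eu, \<alpha>, \<beta>} \<and> darts_at G1 v = {ev, \<gamma>, \<delta>} \<and>
      ((rot eu = \<alpha> \<and> rot ev = \<delta>) \<or> (rot eu = \<beta> \<and> rot ev = \<gamma>)) \<and>
      \<not> splice_closes (opp G1) {\<alpha>, \<beta>, \<gamma>, \<delta>} (pairswap \<alpha> \<gamma> \<beta> \<delta>) \<and>
      \<not> splice_closes (opp G1) {\<alpha>, \<beta>, \<gamma>, \<delta>} (pairswap \<alpha> \<beta> \<gamma> \<delta>)"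
  show "int (num_2factors G1 M1)
        - int (num_2factors (G1\<lparr>vert := (vert G1)(\<gamma> := u, \<beta> := v)\<rparr>) M1)
      = int (num_2factors (join_graph G1 u v eu ev \<alpha> \<gamma> \<beta> \<delta>) (M1 - {eu, ev}))
        - int (num_2factors (join_graph G1 u v eu ev \<alpha> \<beta> \<gamma> \<delta>) (M1 - {eu, ev}))"
    using H by (intro part_b) auto
qed

end
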